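(* Let $G\in\mathcal{G}(\widehat{C}_6,\widehat{C}_7)$, let $x\in V(G)$, let $A$ be a connected component of $G[N_2(x)]$ not belonging to $A^*$, and let $a,b$ be adjacent vertices of $A$ with $|N(a)\cap D|=|N(b)\cap D|=2$. Then there is no independent set $S\subseteq N_2(x)\setminus V(A^* )$ with $D\subseteq N(S)$.
   Context: All graphs are finite, simple and undirected. $\mathcal{G}(\widehat{C}_6,\widehat{C}_7)$ is the family of graphs with no subgraph (not necessarily induced) isomorphic to $C_6$ or $C_7$. For a vertex set $S$, $N_i(S)$ is the set of vertices at distance exactly $i$ from $S$, $N(S)=N_1(S)$, $N(v)=N(\{v\})$, $N_2(v)=N_2(\{v\})$ (all in $G$). $A^*$ is the set of connected components $A$ of $G[N_2(x)]$ for which there exists a vertex $a\in V(A)$ with $N(x)\cap N(a)=N(x)\cap N(V(A))$; $V(A^* )$ is the union of their vertex sets; and $D=N(x)\setminus N(V(A^* ))$. *)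

theory Defs
  imports Main
begin

definition simple_graph :: "'a set \<Rightarrow> ('a \<Rightarrow> 'a \<Rightarrow> bool) \<Rightarrow> bool" where
  "simple_graph V E \<longleftrightarrow> finite V \<and> (\<forall>u v. E u v \<longrightarrow> u \<in> V \<and> v \<in> V)
     \<and> (\<forall>u v. E u v \<longrightarrow> E v u) \<and> (\<forall>v. \<not> E v v)"

definition has_cycle :: "'a set \<Rightarrow> ('a \<Rightarrow> 'a \<Rightarrow> bool) \<Rightarrow> nat \<Rightarrow> bool" where
  "has_cycle V E k \<longleftrightarrow> (\<exists>f. inj_on f {0..<k} \<and> f ` {0..<k} \<subseteq> V
       \<and> (\<forall>i<k. E (f i) (f ((i + 1) mod k))))"

definition nbhd :: "'a set \<Rightarrow> ('a \<Rightarrow> 'a \<Rightarrow> bool) \<Rightarrow> 'a set \<Rightarrow> 'a set" where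
  "nbhd V E S = {u \<in> V. u \<notin> S \<and> (\<exists>s\<in>S. E s u)}"

definition nbhd2 :: "'a set \<Rightarrow> ('a \<Rightarrow> 'a \<Rightarrow> bool) \<Rightarrow> 'a \<Rightarrow> 'a set" where
  "nbhd2 V E x = {u \<in> V. u \<noteq> x \<and> \<not> E x u \<and> (\<exists>w. E x w \<and> E w u)}"

definition components :: "('a \<Rightarrow> 'a \<Rightarrow> bool) \<Rightarrow> 'a set \<Rightarrow> 'a set set" where
  "components E W = {{u. (\<lambda>p q. E p q \<and> p \<in> W \<and> q \<in> W)\<^sup>*\<^sup>* v u} | v. v \<in> W}"

definition Astar :: "'a set \<Rightarrow> ('a \<Rightarrow> 'a \<Rightarrow> bool) \<Rightarrow> 'a \<Rightarrow> 'a set set" where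
  "Astar V E x = {A \<in> components E (nbhd2 V E x).
      \<exists>a\<in>A. nbhd V E {x} \<inter> nbhd V E {a} = nbhd V E {x} \<inter> nbhd V E A}"

definition VAstar :: "'a set \<Rightarrow> ('a \<Rightarrow> 'a \<Rightarrow> bool) \<Rightarrow> 'a \<Rightarrow> 'a set" where
  "VAstar V E x = \<Union> (Astar V E x)"

definition Dset :: "'a set \<Rightarrow> ('a \<Rightarrow> 'a \<Rightarrow> bool) \<Rightarrow> 'a \<Rightarrow> 'a set" where
  "Dset V E x = nbhd V E {x} - nbhd V E (VAstar V E x)"

definition independent :: "('a \<Rightarrow> 'a \<Rightarrow> bool) \<Rightarrow> 'a set \<Rightarrow> bool" where
  "independent E S \<longleftrightarrow> (\<forall>u\<in>S. \<forall>v\<in>S. \<not> E u v)"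

end

theory Submission
  imports Defs
begin

lemma cyc_list:
  assumes "distinct xs" "set xs \<subseteq> V" "\<forall>i<length xs. E (xs!i) (xs!((i+1) mod length xs))"
  shows "has_cycle V E (length xs)"
  unfolding has_cycle_def
  apply (rule exI[of _ "nth xs"])
  using assms by (auto intro: inj_on_nth)

locale G67 =
  fixes V :: "'a set" and E :: "'a \<Rightarrow> 'a \<Rightarrow> bool" and x :: 'a
  assumes sg: "simple_graph V E" and n6: "\<not> has_cycle V E 6" and n7: "\<not> has_cycle V E 7"
    and xV: "x \<in> V"
begin

lemma symE: "E u v \<Longrightarrow> E v u" using sg unfolding simple_graph_def by blast
lemma irr[simp]: "\<not> E v v" using sg unfolding simple_graph_def by blast
lemma inV: "E u v \<Longrightarrow> u \<in> V \<and> v \<in> V" using sg unfolding simple_graph_def by blast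

lemma no6:
  assumes "E v0 v1 \<or> E v1 v0" "E v1 v2 \<or> E v2 v1" "E v2 v3 \<or> E v3 v2" "E v3 v4 \<or> E v4 v3"
    "E v4 v5 \<or> E v5 v4" "E v5 v0 \<or> E v0 v5"
    "distinct [v0,v1,v2,v3,v4,v5]"
  shows False
proof -
  have "E v0 v1" "E v1 v2" "E v2 v3" "E v3 v4" "E v4 v5" "E v5 v0" using assms symE by blast+
  note assms = this assms
  have "set [v0,v1,v2,v3,v4,v5] \<subseteq> V" using assms inV by auto
  moreover have "\<forall>i<length [v0,v1,v2,v3,v4,v5]. E ([v0,v1,v2,v3,v4,v5]!i)
     ([v0,v1,v2,v3,v4,v5]!((i+1) mod length [v0,v1,v2,v3,v4,v5]))"
  proof (intro allI impI)
    fix i assume "i < length [v0,v1,v2,v3,v4,v5]"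
    then have "i \<in> {0,1,2,3,4,5}" by auto
    then show "E ([v0,v1,v2,v3,v4,v5]!i)
     ([v0,v1,v2,v3,v4,v5]!((i+1) mod length [v0,v1,v2,v3,v4,v5]))" using assms by auto
  qed
  ultimately have "has_cycle V E (length [v0,v1,v2,v3,v4,v5])"
    using cyc_list assms(13) by blast
  then show False using n6 by (simp add: eval_nat_numeral)
qed

lemma no7:
  assumes "E v0 v1 \<or> E v1 v0" "E v1 v2 \<or> E v2 v1" "E v2 v3 \<or> E v3 v2" "E v3 v4 \<or> E v4 v3"
    "E v4 v5 \<or> E v5 v4" "E v5 v6 \<or> E v6 v5" "E v6 v0 \<or> E v0 v6"
    "distinct [v0,v1,v2,v3,v4,v5,v6]"
  shows False
proof -
  have "E v0 v1" "E v1 v2" "E v2 v3" "E v3 v4" "E v4 v5" "E v5 v6" "E v6 v0" using assms symE by blast+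
  note assms = this assms
  have "set [v0,v1,v2,v3,v4,v5,v6] \<subseteq> V" using assms inV by auto
  moreover have "\<forall>i<length [v0,v1,v2,v3,v4,v5,v6]. E ([v0,v1,v2,v3,v4,v5,v6]!i)
     ([v0,v1,v2,v3,v4,v5,v6]!((i+1) mod length [v0,v1,v2,v3,v4,v5,v6]))"
  proof (intro allI impI)
    fix i assume "i < length [v0,v1,v2,v3,v4,v5,v6]"
    then have "i \<in> {0,1,2,3,4,5,6}" by auto
    then show "E ([v0,v1,v2,v3,v4,v5,v6]!i)
     ([v0,v1,v2,v3,v4,v5,v6]!((i+1) mod length [v0,v1,v2,v3,v4,v5,v6]))" using assms by auto
  qed
  ultimately have "has_cycle V E (length [v0,v1,v2,v3,v4,v5,v6])"
    using cyc_list assms(15) by blast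
  then show False using n7 by (simp add: eval_nat_numeral)
qed

abbreviation "X \<equiv> nbhd V E {x}"
abbreviation "N2 \<equiv> nbhd2 V E x"
abbreviation "R2 \<equiv> (\<lambda>p q. E p q \<and> p \<in> N2 \<and> q \<in> N2)"

lemma X_iff: "u \<in> X \<longleftrightarrow> E x u"
  unfolding nbhd_def using inV by auto

lemma N2D: "u \<in> N2 \<Longrightarrow> \<not> E x u \<and> u \<noteq> x \<and> (\<exists>w. E x w \<and> E w u)"
  unfolding nbhd2_def by auto

lemma nbhd1: "u \<in> nbhd V E {v} \<longleftrightarrow> E v u"
  unfolding nbhd_def using inV by auto

lemma comp_eq:
  assumes "A \<in> components E N2" "a \<in> A"
  shows "A = {u. R2\<^sup>*\<^sup>* a u}"
proof -
  obtain v where A: "A = {u. R2\<^sup>*\<^sup>* v u}" "v \<in> N2" using assms(1) unfolding components_def by auto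
  have sy: "symp R2" unfolding symp_def using symE by blast
  have "R2\<^sup>*\<^sup>* v a" using A assms by auto
  then have "R2\<^sup>*\<^sup>* a v" using sympD[OF symp_rtranclp[OF sy]] by blast
  show ?thesis unfolding A(1)
    using \<open>R2\<^sup>*\<^sup>* a v\<close> \<open>R2\<^sup>*\<^sup>* v a\<close> rtranclp_trans[of R2] by blast
qed

lemma comp_sub: "R2\<^sup>*\<^sup>* a u \<Longrightarrow> a \<in> N2 \<Longrightarrow> u \<in> N2"
  by (induction rule: rtranclp_induct) auto

lemma comp_N2: "A \<in> components E N2 \<Longrightarrow> A \<subseteq> N2"
  unfolding components_def using comp_sub by blast


lemma escape:
  assumes aN: "a \<in> N2" and bN: "b \<in> N2" and ab: "E a b"
    and ad1: "E a d1" and ad2: "E a d2" and bd3: "E b d3" and bd4: "E b d4"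
    and xd: "E x d1" "E x d2" "E x d3" "E x d4"
    and dd: "distinct [d1,d2,d3,d4]"
    and s1N: "s1 \<in> N2" and s1A: "s1 \<notin> VAstar V E x" and sd1: "E s1 d1"
    and s1a: "s1 \<noteq> a" and s1b: "s1 \<noteq> b"
  shows "\<exists>u\<in>N2. E s1 u \<and> E u d2"
proof (rule ccontr)
  assume nu: "\<not> ?thesis"
  have N2a: "\<not> E x a" "a \<noteq> x" and N2b: "\<not> E x b" "b \<noteq> x" and N2s: "\<not> E x s1" "s1 \<noteq> x" using N2D aN bN s1N by blast+
  have sa: "\<not> E s1 a"
  proof
    assume "E s1 a"
    show False
      by (rule no6[of s1 d1 x d3 b a]) (use \<open>E s1 a\<close> sd1 xd bd3 ab N2a N2b N2s s1a s1b dd in auto)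
  qed
  have sb: "\<not> E s1 b"
  proof
    assume "E s1 b"
    show False
      by (rule no6[of x d2 a b s1 d1]) (use \<open>E s1 b\<close> sd1 xd ad2 ab N2a N2b N2s s1a s1b dd in auto)
  qed
  have Xs1: "\<forall>w. E x w \<and> E w s1 \<longrightarrow> w = d1"
  proof (intro allI impI)
    fix w assume w: "E x w \<and> E w s1"
    show "w = d1"
    proof (rule ccontr)
      assume "w \<noteq> d1"
      show False
      proof (cases "w = d3")
        case True
        show False
          by (rule no7[of x d4 b a d1 s1 d3]) (use True w sd1 xd ad1 bd4 ab N2a N2b N2s s1a s1b dd in auto)
      next
        case False
        show False
          by (rule no7[of x w s1 d1 a b d3]) (use False \<open>w \<noteq> d1\<close> w sd1 xd ad1 bd3 ab N2a N2b N2s s1a s1b dd in auto)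
      qed
    qed
  qed
  define P where "P v \<longleftrightarrow> v \<in> N2 \<and> (\<forall>w. E x w \<and> E w v \<longrightarrow> w = d1) \<and>
     (v = s1 \<or> (\<exists>p\<in>N2. E p v \<and> (\<forall>w. E x w \<and> E w p \<longrightarrow> w = d1)))" for v
  have inv: "P v" if "R2\<^sup>*\<^sup>* s1 v" for v
    using that
  proof (induction rule: rtranclp_induct)
    case base
    then show ?case unfolding P_def using s1N Xs1 by blast
  next
    case (step v v')
    have vN: "v \<in> N2" and v'N: "v' \<in> N2" and vv': "E v v'" using step by auto
    have Xv: "\<forall>w. E x w \<and> E w v \<longrightarrow> w = d1" using step.IH unfolding P_def by blast
    have Xv': "\<forall>w. E x w \<and> E w v' \<longrightarrow> w = d1"
    proof (intro allI impI)
      fix w assume w: "E x w \<and> E w v'"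
      show "w = d1"
      proof (rule ccontr)
        assume wd1: "w \<noteq> d1"
        have N2v: "\<not> E x v" "v \<noteq> x" and N2v': "\<not> E x v'" "v' \<noteq> x" using N2D vN v'N by blast+
        show False
        proof (cases "v = s1")
          case True
          have "v' \<noteq> a" using sa vv' True by auto
          have "v' \<noteq> b" using sb vv' True by auto
          show False
          proof (cases "w = d2")
            case True
            then show False using nu v'N vv' \<open>v = s1\<close> w symE by blast
          next
            case False
            show False
              by (rule no7[of x w v' s1 d1 a d2])
                 (use False wd1 w \<open>v = s1\<close> vv' \<open>v' \<noteq> a\<close> \<open>v' \<noteq> b\<close> sd1 xd ad1 ad2 N2a N2v' N2s s1a dd in auto)
          qed
        next
          case False
          then obtain p where p: "p \<in> N2" "E p v" "\<forall>w. E x w \<and> E w p \<longrightarrow> w = d1"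
            using step.IH unfolding P_def by blast
          obtain w' where w': "E x w'" "E w' p" using N2D[OF p(1)] by blast
          have "w' = d1" using p(3) w' by blast
          have N2p: "\<not> E x p" "p \<noteq> x" using N2D p(1) by blast+
          show False
          proof (cases "v' = p")
            case True
            then show False using p(3) w wd1 by blast
          next
            case False
            show False
              by (rule no6[of x w v' v p d1])
                 (use False wd1 w vv' p(2) w' \<open>w' = d1\<close> N2v N2v' N2p in auto)
          qed
        qed
      qed
    qed
    show ?case unfolding P_def using v'N Xv' vN vv' Xv by blast
  qed
  define B where "B = {u. R2\<^sup>*\<^sup>* s1 u}"
  have Bc: "B \<in> components E N2" unfolding B_def components_def using s1N by blast
  have s1B: "s1 \<in> B" unfolding B_def by simp
  have BN: "B \<subseteq> N2" using comp_N2[OF Bc] .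
  have "X \<inter> nbhd V E {s1} = X \<inter> nbhd V E B"
  proof
    show "X \<inter> nbhd V E {s1} \<subseteq> X \<inter> nbhd V E B"
    proof
      fix u assume u: "u \<in> X \<inter> nbhd V E {s1}"
      then have "E x u" "E s1 u" using X_iff nbhd1 by auto
      moreover have "u \<notin> B" using BN N2D \<open>E x u\<close> by blast
      ultimately show "u \<in> X \<inter> nbhd V E B" using s1B inV unfolding nbhd_def by auto
    qed
  next
    show "X \<inter> nbhd V E B \<subseteq> X \<inter> nbhd V E {s1}"
    proof
      fix u assume u: "u \<in> X \<inter> nbhd V E B"
      then obtain s where s: "s \<in> B" "E s u" "E x u" using X_iff unfolding nbhd_def by auto
      have "P s" using inv s(1) unfolding B_def by blast
      then have "u = d1" using s symE unfolding P_def by blast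
      then show "u \<in> X \<inter> nbhd V E {s1}" using u sd1 nbhd1 by auto
    qed
  qed
  then have "B \<in> Astar V E x" unfolding Astar_def using Bc s1B by blast
  then have "s1 \<in> VAstar V E x" unfolding VAstar_def using s1B by blast
  then show False using s1A by blast
qed


lemma mainlem:
  assumes Ac: "A \<in> components E N2" and AA: "A \<notin> Astar V E x"
    and aA: "a \<in> A" and bA: "b \<in> A" and ab: "E a b"
    and ca: "card (nbhd V E {a} \<inter> Dset V E x) = 2"
    and cb: "card (nbhd V E {b} \<inter> Dset V E x) = 2"
    and SS: "S \<subseteq> N2 - VAstar V E x" and Si: "independent E S"
    and SD: "Dset V E x \<subseteq> nbhd V E S" and aS: "a \<notin> S"
  shows False
proof -
  have AN: "A \<subseteq> N2" using comp_N2[OF Ac] .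
  have aN: "a \<in> N2" and bN: "b \<in> N2" using AN aA bA by auto
  have N2a: "\<not> E x a" "a \<noteq> x" and N2b: "\<not> E x b" "b \<noteq> x" using N2D aN bN by blast+
  have ba: "E b a" using symE ab .
  have DX: "Dset V E x \<subseteq> X" unfolding Dset_def by blast
  obtain d1 d2 where d12: "nbhd V E {a} \<inter> Dset V E x = {d1, d2}" "d1 \<noteq> d2"
    using ca card_2_iff by metis
  obtain d3 d4 where d34: "nbhd V E {b} \<inter> Dset V E x = {d3, d4}" "d3 \<noteq> d4"
    using cb card_2_iff by metis
  have D1: "d1 \<in> Dset V E x" "d2 \<in> Dset V E x" "d3 \<in> Dset V E x" "d4 \<in> Dset V E x"
    using d12 d34 by auto
  have ad: "E a d1" "E a d2" using d12 nbhd1 by blast+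
  have bd: "E b d3" "E b d4" using d34 nbhd1 by blast+
  have xd: "E x d1" "E x d2" "E x d3" "E x d4" using D1 DX X_iff by blast+
  have Aeq: "A = {u. R2\<^sup>*\<^sup>* a u}" using comp_eq[OF Ac aA] .
  have Aab: "u = a \<or> u = b" if "R2\<^sup>*\<^sup>* a u" for u
    using that
  proof (induction rule: rtranclp_induct)
    case base then show ?case by simp
  next
    case (step u u')
    show ?case
    proof (rule ccontr)
      assume nab: "\<not> (u' = a \<or> u' = b)"
      have u'N: "u' \<in> N2" and uu': "E u u'" using step by auto
      obtain z where z: "E x z" "E z u'" using N2D[OF u'N] by blast
      have N2u': "\<not> E x u'" "u' \<noteq> x" using N2D u'N by blast+
      show False using step.IH
      proof
        assume "u = a"
        obtain w where w: "w \<in> {d3, d4}" "w \<noteq> z" using d34(2) by blast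
        have "E b w" "E x w" using w bd xd by auto
        show False
          by (rule no6[of x z u' a b w]) (use w z \<open>E b w\<close> \<open>E x w\<close> \<open>u = a\<close> uu' nab ab N2a N2b N2u' in auto)
      next
        assume "u = b"
        obtain w where w: "w \<in> {d1, d2}" "w \<noteq> z" using d12(2) by blast
        have "E a w" "E x w" using w ad xd by auto
        show False
          by (rule no6[of x z u' b a w]) (use w z \<open>E a w\<close> \<open>E x w\<close> \<open>u = b\<close> uu' nab ab N2a N2b N2u' in auto)
      qed
    qed
  qed
  have Asub: "A \<subseteq> {a, b}" using Aeq Aab by blast
  have XA: "u \<in> X \<inter> nbhd V E A \<longleftrightarrow> E x u \<and> (E a u \<or> E b u)" for u
  proof
    assume "u \<in> X \<inter> nbhd V E A"
    then show "E x u \<and> (E a u \<or> E b u)" using Asub X_iff unfolding nbhd_def by blast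
  next
    assume h: "E x u \<and> (E a u \<or> E b u)"
    have "u \<notin> A" using h AN N2D by blast
    then show "u \<in> X \<inter> nbhd V E A" using h aA bA X_iff inV unfolding nbhd_def by blast
  qed
  have Xa: "u \<in> X \<inter> nbhd V E {a} \<longleftrightarrow> E x u \<and> E a u" for u using X_iff nbhd1 by blast
  have Xb: "u \<in> X \<inter> nbhd V E {b} \<longleftrightarrow> E x u \<and> E b u" for u using X_iff nbhd1 by blast
  have "X \<inter> nbhd V E {a} \<noteq> X \<inter> nbhd V E A" using AA Ac aA unfolding Astar_def by blast
  then obtain y where y: "E x y" "E b y" "\<not> E a y" using Xa XA by blast
  have "X \<inter> nbhd V E {b} \<noteq> X \<inter> nbhd V E A" using AA Ac bA unfolding Astar_def by blast
  then obtain z where z: "E x z" "E a z" "\<not> E b z" using Xb XA by blast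
  have disj: "\<not> E b w" if "E x w" "E a w" for w
  proof
    assume "E b w"
    show False
      by (rule no6[of x z a w b y]) (use that \<open>E b w\<close> y z ab N2a N2b in auto)
  qed
  have nbd: "\<not> E b d1" "\<not> E b d2" using disj ad xd by blast+
  have dd: "distinct [d1,d2,d3,d4]" using d12(2) d34(2) nbd bd by auto
  obtain s1 where s1: "s1 \<in> S" "E s1 d1" using SD D1(1) unfolding nbhd_def by blast
  obtain s2 where s2: "s2 \<in> S" "E s2 d2" using SD D1(2) unfolding nbhd_def by blast
  have s1N: "s1 \<in> N2" "s1 \<notin> VAstar V E x" and s2N: "s2 \<in> N2" "s2 \<notin> VAstar V E x" using SS s1 s2 by auto
  have N2s: "\<not> E x s1" "s1 \<noteq> x" "\<not> E x s2" "s2 \<noteq> x" using N2D s1N s2N by blast+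
  have s1ab: "s1 \<noteq> a" "s1 \<noteq> b" using s1 aS nbd by auto
  have s2ab: "s2 \<noteq> a" "s2 \<noteq> b" using s2 aS nbd by auto
  have dd2: "distinct [d2,d1,d3,d4]" using dd by auto
  obtain u1 where u1: "u1 \<in> N2" "E s1 u1" "E u1 d2"
    using escape[OF aN bN ab ad(1) ad(2) bd xd dd s1N s1(2) s1ab] by blast
  obtain u2 where u2: "u2 \<in> N2" "E s2 u2" "E u2 d1"
    using escape[OF aN bN ab ad(2) ad(1) bd xd(2) xd(1) xd(3) xd(4) dd2 s2N s2(2) s2ab] by blast
  have N2u: "\<not> E x u1" "u1 \<noteq> x" "\<not> E x u2" "u2 \<noteq> x" using N2D u1(1) u2(1) by blast+
  have s12: "\<not> E s1 s2" "\<not> E s2 s1" using Si s1 s2 unfolding independent_def by blast+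
  have "s1 \<noteq> s2"
  proof
    assume "s1 = s2"
    show False
      by (rule no7[of s1 d1 a b d3 x d2]) (use \<open>s1 = s2\<close> s1 s2 ad ab bd xd dd N2a N2b N2s s1ab in auto)
  qed
  show False
  proof (cases "u1 = u2")
    case True
    show False
      by (rule no6[of s1 u1 s2 d2 x d1]) (use True \<open>s1 \<noteq> s2\<close> u1 u2 s1 s2 xd d12(2) N2s N2u in auto)
  next
    case False
    show False
      by (rule no6[of s1 u1 d2 s2 u2 d1]) (use False \<open>s1 \<noteq> s2\<close> s12 u1 u2 s1 s2 xd d12(2) N2s N2u in auto)
  qed
qed

end

theorem corollary2p13:
  fixes V :: "'a set" and E :: "'a \<Rightarrow> 'a \<Rightarrow> bool" and x a b :: 'a and A :: "'a set"
  assumes "simple_graph V E"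
    and "\<not> has_cycle V E 6" and "\<not> has_cycle V E 7"
    and "x \<in> V"
    and "A \<in> components E (nbhd2 V E x)" and "A \<notin> Astar V E x"
    and "a \<in> A" and "b \<in> A" and "E a b"
    and "card (nbhd V E {a} \<inter> Dset V E x) = 2"
    and "card (nbhd V E {b} \<inter> Dset V E x) = 2"
  shows "\<not> (\<exists>S. S \<subseteq> nbhd2 V E x - VAstar V E x \<and> independent E S
              \<and> Dset V E x \<subseteq> nbhd V E S)"
proof
  assume "\<exists>S. S \<subseteq> nbhd2 V E x - VAstar V E x \<and> independent E S \<and> Dset V E x \<subseteq> nbhd V E S"
  then obtain S where S: "S \<subseteq> nbhd2 V E x - VAstar V E x" "independent E S" "Dset V E x \<subseteq> nbhd V E S"
    by blast
  interpret G67 V E x using assms(1-4) by unfold_locales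
  show False
  proof (cases "a \<in> S")
    case False
    then show False using mainlem[OF assms(5-11) S] by blast
  next
    case True
    then have "b \<notin> S" using S(2) assms(9) unfolding independent_def by blast
    then show False using mainlem[OF assms(5,6,8,7) symE[OF assms(9)] assms(11,10) S] by blast
  qed
qed

end
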